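(* Let $\Pi$ be the topological prismatoid \#1039 of Criado and Santos: a polyhedral $4$-sphere on the $14$ vertices $0,1,2,3,4,5,6,a,b,c,d,e,f,g$ whose simplicial facets are exactly the following $4$-simplices (each string lists the five vertices of a facet): 0145f, 014ad, 014ae, 014bc, 014bf, 014cd, 04bcd, 05bde, 05cde, 0123d, 0126d, 0134e, 013ad, 013ae, 0156g, 015bf, 015bg, 016cd, 016cg, 01bcg, 0234e, 023cd, 023ce, 0245f, 024ae, 024af, 0256g, 025ae, 025af, 025be, 025bg, 026be, 026bg, 026cd, 026ce, 03acd, 03ace, 04abd, 04abf, 05abd, 05abf, 05acd, 05ace, 06bce, 06bcg, 0bcde, 1234e, 123ae, 123af, 123bf, 123bg, 123cd, 123cg, 1245f, 124ae, 124af, 1256g, 125bf, 125bg, 126cd, 126cg, 13abf, 13abg, 13acd, 13acg, 14abf, 14abg, 14acd, 14acg, 14bcg, 23ace, 23acf, 23bcf, 23bcg, 25abe, 25abf, 26abe, 26abf, 26ace, 26acf, 26bcf, 26bcg, 3abfg, 3acfg, 3bcfg, 4abcd, 4abcg, 5abde, 5acde, 6abef, 6acef, 6bcef, and which in addition has exactly two non-simplicial facets, its two bases, with vertex sets $\{0,1,\dots,6\}$ and $\{a,b,\dots,g\}$. Then $\Pi$ is not realizable: there is no convex $5$-polytope whose boundary complex is combinatorially isomorphic to $\Pi$.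
   Context: A topological prismatoid (Criado–Santos) is a combinatorial abstraction of a geometric prismatoid, i.e. of a polytope all of whose vertices lie in two parallel facets (the bases); all other facets are here simplices. *)

theory Defs
  imports "HOL-Analysis.Analysis"
begin

definition prismatoid_vertices :: "char set" where
  "prismatoid_vertices = set ''0123456abcdefg''"

definition prismatoid_simplicial_facets :: "char set set" where
  "prismatoid_simplicial_facets = set (map set [
     ''0145f'', ''014ad'', ''014ae'', ''014bc'', ''014bf'', ''014cd'', ''04bcd'', ''05bde'',
     ''05cde'', ''0123d'', ''0126d'', ''0134e'', ''013ad'', ''013ae'', ''0156g'', ''015bf'',
     ''015bg'', ''016cd'', ''016cg'', ''01bcg'', ''0234e'', ''023cd'', ''023ce'', ''0245f'',
     ''024ae'', ''024af'', ''0256g'', ''025ae'', ''025af'', ''025be'', ''025bg'', ''026be'',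
     ''026bg'', ''026cd'', ''026ce'', ''03acd'', ''03ace'', ''04abd'', ''04abf'', ''05abd'',
     ''05abf'', ''05acd'', ''05ace'', ''06bce'', ''06bcg'', ''0bcde'', ''1234e'', ''123ae'',
     ''123af'', ''123bf'', ''123bg'', ''123cd'', ''123cg'', ''1245f'', ''124ae'', ''124af'',
     ''1256g'', ''125bf'', ''125bg'', ''126cd'', ''126cg'', ''13abf'', ''13abg'', ''13acd'',
     ''13acg'', ''14abf'', ''14abg'', ''14acd'', ''14acg'', ''14bcg'', ''23ace'', ''23acf'',
     ''23bcf'', ''23bcg'', ''25abe'', ''25abf'', ''26abe'', ''26abf'', ''26ace'', ''26acf'',
     ''26bcf'', ''26bcg'', ''3abfg'', ''3acfg'', ''3bcfg'', ''4abcd'', ''4abcg'', ''5abde'',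
     ''5acde'', ''6abef'', ''6acef'', ''6bcef''])"

definition prismatoid_bases :: "char set set" where
  "prismatoid_bases = {set ''0123456'', set ''abcdefg''}"

definition prismatoid_facets :: "char set set" where
  "prismatoid_facets = prismatoid_simplicial_facets \<union> prismatoid_bases"

definition poly_vertices :: "'a::euclidean_space set \<Rightarrow> 'a set" where
  "poly_vertices P = {v. v extreme_point_of P}"

text \<open>A convex polytope P realizes the prismatoid if there is a bijection between the
vertices of the prismatoid and the vertices of P mapping the facets of the prismatoid
exactly onto the vertex sets of the facets of P (this determines a combinatorial
isomorphism of the boundary complex of P with the prismatoid).\<close>

definition realizes_prismatoid :: "'a::euclidean_space set \<Rightarrow> bool" where
  "realizes_prismatoid P \<longleftrightarrow>
     (\<exists>\<phi>. bij_betw \<phi> prismatoid_vertices (poly_vertices P) \<and>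
          (\<lambda>S. \<phi> ` S) ` prismatoid_facets = poly_vertices ` {F. F facet_of P})"

end

theory Submission
  imports Defs
begin

lemma facet_fun:
  fixes \<phi> :: "char \<Rightarrow> 'a::euclidean_space"
  assumes P: "polytope P" and bij: "bij_betw \<phi> V (poly_vertices P)"
    and fac: "(\<lambda>S. \<phi> ` S) ` Fs = poly_vertices ` {F. F facet_of P}" and S: "S \<in> Fs"
    and SV: "S \<subseteq> V"
  obtains n b where "\<And>x. x \<in> S \<Longrightarrow> n \<bullet> \<phi> x = b"
    "\<And>x. x \<in> V \<Longrightarrow> x \<notin> S \<Longrightarrow> n \<bullet> \<phi> x < b"
proof -
  have "\<phi> ` S \<in> poly_vertices ` {F. F facet_of P}" using fac S by blast
  then obtain F where F: "F facet_of P" and FS: "poly_vertices F = \<phi> ` S" by auto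
  obtain n b where nb: "n \<noteq> 0" "P \<subseteq> {x. n \<bullet> x \<le> b}" "F = P \<inter> {x. n \<bullet> x = b}"
    using facet_of_polyhedron[OF polytope_imp_polyhedron[OF P] F] by metis
  have "n \<bullet> \<phi> x = b" if "x \<in> S" for x
  proof -
    have "\<phi> x extreme_point_of F" using FS that unfolding poly_vertices_def by auto
    then have "\<phi> x \<in> F" by (simp add: extreme_point_of_def)
    then show ?thesis using nb by auto
  qed
  moreover have "n \<bullet> \<phi> x < b" if "x \<in> V" "x \<notin> S" for x
  proof -
    have ext: "\<phi> x extreme_point_of P" using bij that unfolding bij_betw_def poly_vertices_def by auto
    then have inP: "\<phi> x \<in> P" by (simp add: extreme_point_of_def)
    then have le: "n \<bullet> \<phi> x \<le> b" using nb by auto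
    show ?thesis
    proof (rule ccontr)
      assume "\<not> n \<bullet> \<phi> x < b"
      then have "\<phi> x \<in> F" using le inP nb by auto
      then have "\<phi> x extreme_point_of F"
        using extreme_point_of_face[OF facet_of_imp_face_of[OF F]] ext by auto
      then have "\<phi> x \<in> \<phi> ` S" using FS unfolding poly_vertices_def by auto
      then obtain y where y: "y \<in> S" "\<phi> x = \<phi> y" by auto
      have "y \<in> V" using y SV by auto
      then have "x = y" using y \<open>x \<in> V\<close> bij unfolding bij_betw_def inj_on_def by metis
      then show False using y that by auto
    qed
  qed
  ultimately show ?thesis using that by blast
qed

lemma dep7:
  fixes \<phi> :: "char \<Rightarrow> 'a::euclidean_space"
  assumes inj: "inj_on \<phi> C" and fin: "finite C" and card: "card C = 7"
    and sub: "\<phi> ` C \<subseteq> P" and dim: "aff_dim P = 5"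
  obtains l where "(\<Sum>x\<in>C. l x) = 0" "(\<Sum>x\<in>C. l x *\<^sub>R \<phi> x) = 0" "\<exists>x\<in>C. l x \<noteq> 0"
proof -
  let ?T = "\<phi> ` C"
  have cT: "card ?T = 7" using card_image[OF inj] card by simp
  have "affine_dependent ?T"
  proof (rule ccontr)
    assume "\<not> affine_dependent ?T"
    then have "of_nat (card ?T) = aff_dim ?T + 1" by (rule aff_dim_affine_independent)
    moreover have "aff_dim ?T \<le> 5" using aff_dim_subset[OF sub] dim by simp
    ultimately show False using cT by simp
  qed
  then obtain U where U: "sum U ?T = 0" "\<exists>v\<in>?T. U v \<noteq> 0" "(\<Sum>v\<in>?T. U v *\<^sub>R v) = 0"
    using affine_dependent_explicit_finite[of ?T] fin by auto
  show ?thesis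
  proof (rule that[of "U \<circ> \<phi>"])
    show "(\<Sum>x\<in>C. (U \<circ> \<phi>) x) = 0" using U(1) sum.reindex[OF inj, of U] by simp
    show "(\<Sum>x\<in>C. (U \<circ> \<phi>) x *\<^sub>R \<phi> x) = 0"
      using U(3) sum.reindex[OF inj, of "\<lambda>v. U v *\<^sub>R v"] by simp
    show "\<exists>x\<in>C. (U \<circ> \<phi>) x \<noteq> 0" using U(2) by auto
  qed
qed

lemma dep_func:
  fixes \<phi> :: "char \<Rightarrow> 'a::euclidean_space"
  assumes "\<And>x. x \<in> S \<Longrightarrow> n \<bullet> \<phi> x = b" "finite C" "(\<Sum>x\<in>C. l x) = 0"
    "(\<Sum>x\<in>C. l x *\<^sub>R \<phi> x) = 0"
  shows "(\<Sum>x\<in>C-S. l x * (n \<bullet> \<phi> x - b)) = 0"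
proof -
  have "(\<Sum>x\<in>C. l x * (n \<bullet> \<phi> x - b)) = n \<bullet> (\<Sum>x\<in>C. l x *\<^sub>R \<phi> x) - b * (\<Sum>x\<in>C. l x)"
    by (simp add: inner_sum_right sum_subtractf sum_distrib_left algebra_simps)
  also have "\<dots> = 0" using assms by simp
  finally have "(\<Sum>x\<in>C. l x * (n \<bullet> \<phi> x - b)) = 0" .
  moreover have "(\<Sum>x\<in>C\<inter>S. l x * (n \<bullet> \<phi> x - b)) = 0" using assms(1) by simp
  ultimately show ?thesis using sum.Int_Diff[OF assms(2), of "\<lambda>x. l x * (n \<bullet> \<phi> x - b)" S] by simp
qed

lemma opp2:
  fixes x y a b :: real
  assumes "x < 0" "y < 0" "a * x + b * y = 0"
  shows "(0 < a \<longleftrightarrow> b < 0) \<and> (a < 0 \<longleftrightarrow> 0 < b)"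
  using assms
  by (smt (verit, best) mult_neg_neg mult_pos_neg mult_neg_pos zero_less_mult_iff mult_nonneg_nonpos mult_nonpos_nonpos)

lemma final_contra:
  fixes l1 l3 l4 l5 m1 m3 m4 A1 A3 A5 B1 B3 B4 :: real
  assumes e1: "l1*A1 + l3*A3 + l5*A5 = 0" and e2: "l1*B1 + l3*B3 + l4*B4 = 0"
    and e3: "m1*A1 + m3*A3 = 0" and e4: "m1*B1 + m3*B3 + m4*B4 = 0"
    and n: "A1 < 0" "A5 < 0" "B1 < 0" "B4 < 0"
    and sl: "(0 < l3 \<and> 0 < l5 \<and> l4 < 0) \<or> (l3 < 0 \<and> l5 < 0 \<and> 0 < l4)"
    and sm: "(0 < m3 \<and> 0 < m4) \<or> (m3 < 0 \<and> m4 < 0)"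
  shows False
proof -
  define G where "G = B1*A3 - A1*B3"
  have f1: "l3*G + l5*(B1*A5) - l4*(A1*B4) = 0"
  proof -
    have "B1*(l1*A1 + l3*A3 + l5*A5) - A1*(l1*B1 + l3*B3 + l4*B4) = 0" using e1 e2 by simp
    then show ?thesis unfolding G_def by (simp add: algebra_simps)
  qed
  have f2: "m3*G - m4*(A1*B4) = 0"
  proof -
    have "B1*(m1*A1 + m3*A3) - A1*(m1*B1 + m3*B3 + m4*B4) = 0" using e3 e4 by simp
    then show ?thesis unfolding G_def by (simp add: algebra_simps)
  qed
  have p1: "B1*A5 > 0" using n by (simp add: mult_neg_neg)
  have p2: "A1*B4 > 0" using n by (simp add: mult_neg_neg)
  have "G < 0"
  proof (cases "0 < l3")
    case True
    then have "0 < l5" "l4 < 0" using sl by auto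
    then have "l5*(B1*A5) > 0" "l4*(A1*B4) < 0" using p1 p2 by (auto simp: mult_pos_pos mult_neg_pos)
    then have "l3*G < 0" using f1 by linarith
    then show ?thesis using True by (simp add: mult_less_0_iff)
  next
    case False
    then have "l3 < 0" "l5 < 0" "0 < l4" using sl by auto
    then have "l5*(B1*A5) < 0" "l4*(A1*B4) > 0" using p1 p2 by (auto simp: mult_neg_pos mult_pos_pos)
    then have "l3*G > 0" using f1 by linarith
    then show ?thesis using \<open>l3 < 0\<close> by (simp add: zero_less_mult_iff)
  qed
  moreover have "G > 0"
  proof (cases "0 < m3")
    case True
    then have "0 < m4" using sm by auto
    then have "m3*G > 0" using f2 p2 by (simp add: mult_pos_pos)
    then show ?thesis using True by (simp add: zero_less_mult_iff)
  next
    case False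
    then have "m3 < 0" "m4 < 0" using sm by auto
    then have "m3*G < 0" using f2 p2 by (simp add: mult_neg_pos)
    then show ?thesis using \<open>m3 < 0\<close> by (simp add: mult_less_0_iff)
  qed
  ultimately show False by simp
qed

theorem mainTheorem3:
  fixes P :: "'a::euclidean_space set"
  assumes "polytope P" and "aff_dim P = 5"
  shows "\<not> realizes_prismatoid P"
proof
  assume "realizes_prismatoid P"
  then obtain \<phi> where bij: "bij_betw \<phi> prismatoid_vertices (poly_vertices P)"
    and fac: "(\<lambda>S. \<phi> ` S) ` prismatoid_facets = poly_vertices ` {F. F facet_of P}"
    unfolding realizes_prismatoid_def by blast
  have inj: "inj_on \<phi> prismatoid_vertices" using bij by (simp add: bij_betw_def)
  have inP: "\<phi> ` prismatoid_vertices \<subseteq> P"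
    using bij unfolding bij_betw_def poly_vertices_def extreme_point_of_def by auto

  have "set ''0123456'' \<in> prismatoid_facets" by (simp add: prismatoid_facets_def prismatoid_bases_def)
  moreover have "set ''0123456'' \<subseteq> prismatoid_vertices" by (simp add: prismatoid_vertices_def)
  ultimately obtain n0123456 b0123456 where
    Z0123456: "\<And>x. x \<in> set ''0123456'' \<Longrightarrow> n0123456 \<bullet> \<phi> x = b0123456" and
    N0123456: "\<And>x. x \<in> prismatoid_vertices \<Longrightarrow> x \<notin> set ''0123456'' \<Longrightarrow> n0123456 \<bullet> \<phi> x < b0123456"
    using facet_fun[OF assms(1) bij fac] by blast
  define h0123456 where "h0123456 = (\<lambda>x. n0123456 \<bullet> \<phi> x - b0123456)"

  have "set ''0123d'' \<in> prismatoid_facets" unfolding prismatoid_facets_def prismatoid_simplicial_facets_def set_map by (intro UnI1 imageI) simp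
  moreover have "set ''0123d'' \<subseteq> prismatoid_vertices" by (simp add: prismatoid_vertices_def)
  ultimately obtain n0123d b0123d where
    Z0123d: "\<And>x. x \<in> set ''0123d'' \<Longrightarrow> n0123d \<bullet> \<phi> x = b0123d" and
    N0123d: "\<And>x. x \<in> prismatoid_vertices \<Longrightarrow> x \<notin> set ''0123d'' \<Longrightarrow> n0123d \<bullet> \<phi> x < b0123d"
    using facet_fun[OF assms(1) bij fac] by blast
  define h0123d where "h0123d = (\<lambda>x. n0123d \<bullet> \<phi> x - b0123d)"

  have "set ''0134e'' \<in> prismatoid_facets" unfolding prismatoid_facets_def prismatoid_simplicial_facets_def set_map by (intro UnI1 imageI) simp
  moreover have "set ''0134e'' \<subseteq> prismatoid_vertices" by (simp add: prismatoid_vertices_def)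
  ultimately obtain n0134e b0134e where
    Z0134e: "\<And>x. x \<in> set ''0134e'' \<Longrightarrow> n0134e \<bullet> \<phi> x = b0134e" and
    N0134e: "\<And>x. x \<in> prismatoid_vertices \<Longrightarrow> x \<notin> set ''0134e'' \<Longrightarrow> n0134e \<bullet> \<phi> x < b0134e"
    using facet_fun[OF assms(1) bij fac] by blast
  define h0134e where "h0134e = (\<lambda>x. n0134e \<bullet> \<phi> x - b0134e)"

  have "set ''0145f'' \<in> prismatoid_facets" unfolding prismatoid_facets_def prismatoid_simplicial_facets_def set_map by (intro UnI1 imageI) simp
  moreover have "set ''0145f'' \<subseteq> prismatoid_vertices" by (simp add: prismatoid_vertices_def)
  ultimately obtain n0145f b0145f where
    Z0145f: "\<And>x. x \<in> set ''0145f'' \<Longrightarrow> n0145f \<bullet> \<phi> x = b0145f" and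
    N0145f: "\<And>x. x \<in> prismatoid_vertices \<Longrightarrow> x \<notin> set ''0145f'' \<Longrightarrow> n0145f \<bullet> \<phi> x < b0145f"
    using facet_fun[OF assms(1) bij fac] by blast
  define h0145f where "h0145f = (\<lambda>x. n0145f \<bullet> \<phi> x - b0145f)"

  have "set ''0234e'' \<in> prismatoid_facets" unfolding prismatoid_facets_def prismatoid_simplicial_facets_def set_map by (intro UnI1 imageI) simp
  moreover have "set ''0234e'' \<subseteq> prismatoid_vertices" by (simp add: prismatoid_vertices_def)
  ultimately obtain n0234e b0234e where
    Z0234e: "\<And>x. x \<in> set ''0234e'' \<Longrightarrow> n0234e \<bullet> \<phi> x = b0234e" and
    N0234e: "\<And>x. x \<in> prismatoid_vertices \<Longrightarrow> x \<notin> set ''0234e'' \<Longrightarrow> n0234e \<bullet> \<phi> x < b0234e"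
    using facet_fun[OF assms(1) bij fac] by blast
  define h0234e where "h0234e = (\<lambda>x. n0234e \<bullet> \<phi> x - b0234e)"

  have "set ''1234e'' \<in> prismatoid_facets" unfolding prismatoid_facets_def prismatoid_simplicial_facets_def set_map by (intro UnI1 imageI) simp
  moreover have "set ''1234e'' \<subseteq> prismatoid_vertices" by (simp add: prismatoid_vertices_def)
  ultimately obtain n1234e b1234e where
    Z1234e: "\<And>x. x \<in> set ''1234e'' \<Longrightarrow> n1234e \<bullet> \<phi> x = b1234e" and
    N1234e: "\<And>x. x \<in> prismatoid_vertices \<Longrightarrow> x \<notin> set ''1234e'' \<Longrightarrow> n1234e \<bullet> \<phi> x < b1234e"
    using facet_fun[OF assms(1) bij fac] by blast
  define h1234e where "h1234e = (\<lambda>x. n1234e \<bullet> \<phi> x - b1234e)"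

  have "set ''024ae'' \<in> prismatoid_facets" unfolding prismatoid_facets_def prismatoid_simplicial_facets_def set_map by (intro UnI1 imageI) simp
  moreover have "set ''024ae'' \<subseteq> prismatoid_vertices" by (simp add: prismatoid_vertices_def)
  ultimately obtain n024ae b024ae where
    Z024ae: "\<And>x. x \<in> set ''024ae'' \<Longrightarrow> n024ae \<bullet> \<phi> x = b024ae" and
    N024ae: "\<And>x. x \<in> prismatoid_vertices \<Longrightarrow> x \<notin> set ''024ae'' \<Longrightarrow> n024ae \<bullet> \<phi> x < b024ae"
    using facet_fun[OF assms(1) bij fac] by blast
  define h024ae where "h024ae = (\<lambda>x. n024ae \<bullet> \<phi> x - b024ae)"

  have "set ''025ae'' \<in> prismatoid_facets" unfolding prismatoid_facets_def prismatoid_simplicial_facets_def set_map by (intro UnI1 imageI) simp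
  moreover have "set ''025ae'' \<subseteq> prismatoid_vertices" by (simp add: prismatoid_vertices_def)
  ultimately obtain n025ae b025ae where
    Z025ae: "\<And>x. x \<in> set ''025ae'' \<Longrightarrow> n025ae \<bullet> \<phi> x = b025ae" and
    N025ae: "\<And>x. x \<in> prismatoid_vertices \<Longrightarrow> x \<notin> set ''025ae'' \<Longrightarrow> n025ae \<bullet> \<phi> x < b025ae"
    using facet_fun[OF assms(1) bij fac] by blast
  define h025ae where "h025ae = (\<lambda>x. n025ae \<bullet> \<phi> x - b025ae)"

  have "set ''014ae'' \<in> prismatoid_facets" unfolding prismatoid_facets_def prismatoid_simplicial_facets_def set_map by (intro UnI1 imageI) simp
  moreover have "set ''014ae'' \<subseteq> prismatoid_vertices" by (simp add: prismatoid_vertices_def)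
  ultimately obtain n014ae b014ae where
    Z014ae: "\<And>x. x \<in> set ''014ae'' \<Longrightarrow> n014ae \<bullet> \<phi> x = b014ae" and
    N014ae: "\<And>x. x \<in> prismatoid_vertices \<Longrightarrow> x \<notin> set ''014ae'' \<Longrightarrow> n014ae \<bullet> \<phi> x < b014ae"
    using facet_fun[OF assms(1) bij fac] by blast
  define h014ae where "h014ae = (\<lambda>x. n014ae \<bullet> \<phi> x - b014ae)"

  have "set ''013ae'' \<in> prismatoid_facets" unfolding prismatoid_facets_def prismatoid_simplicial_facets_def set_map by (intro UnI1 imageI) simp
  moreover have "set ''013ae'' \<subseteq> prismatoid_vertices" by (simp add: prismatoid_vertices_def)
  ultimately obtain n013ae b013ae where
    Z013ae: "\<And>x. x \<in> set ''013ae'' \<Longrightarrow> n013ae \<bullet> \<phi> x = b013ae" and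
    N013ae: "\<And>x. x \<in> prismatoid_vertices \<Longrightarrow> x \<notin> set ''013ae'' \<Longrightarrow> n013ae \<bullet> \<phi> x < b013ae"
    using facet_fun[OF assms(1) bij fac] by blast
  define h013ae where "h013ae = (\<lambda>x. n013ae \<bullet> \<phi> x - b013ae)"

  have "set ''123ae'' \<in> prismatoid_facets" unfolding prismatoid_facets_def prismatoid_simplicial_facets_def set_map by (intro UnI1 imageI) simp
  moreover have "set ''123ae'' \<subseteq> prismatoid_vertices" by (simp add: prismatoid_vertices_def)
  ultimately obtain n123ae b123ae where
    Z123ae: "\<And>x. x \<in> set ''123ae'' \<Longrightarrow> n123ae \<bullet> \<phi> x = b123ae" and
    N123ae: "\<And>x. x \<in> prismatoid_vertices \<Longrightarrow> x \<notin> set ''123ae'' \<Longrightarrow> n123ae \<bullet> \<phi> x < b123ae"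
    using facet_fun[OF assms(1) bij fac] by blast
  define h123ae where "h123ae = (\<lambda>x. n123ae \<bullet> \<phi> x - b123ae)"

  have subl: "set ''012345a'' \<subseteq> prismatoid_vertices" by (simp add: prismatoid_vertices_def)
  obtain l where l1: "(\<Sum>x\<in>set ''012345a''. l x) = 0" and l2: "(\<Sum>x\<in>set ''012345a''. l x *\<^sub>R \<phi> x) = 0"
    and l3: "\<exists>x\<in>set ''012345a''. l x \<noteq> 0"
    using dep7[of \<phi> "set ''012345a''" P] inj_on_subset[OF inj subl] inP subl assms(2) by (auto simp: image_subset_iff)

  have El0123456: "l (CHR ''a'') * h0123456 (CHR ''a'') = 0"
  proof -
    have "(\<Sum>x\<in>set ''012345a'' - set ''0123456''. l x * h0123456 x) = 0"
      unfolding h0123456_def by (rule dep_func[OF Z0123456 _ l1 l2]) simp_all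
    moreover have "set ''012345a'' - set ''0123456'' = {CHR ''a''}" by auto
    ultimately show ?thesis by (simp add: algebra_simps)
  qed
  have Gl0123456: "h0123456 (CHR ''a'') < 0"
    unfolding h0123456_def by (auto intro!: N0123456 simp: prismatoid_vertices_def)

  have El0123d: "l (CHR ''4'') * h0123d (CHR ''4'') + l (CHR ''5'') * h0123d (CHR ''5'') + l (CHR ''a'') * h0123d (CHR ''a'') = 0"
  proof -
    have "(\<Sum>x\<in>set ''012345a'' - set ''0123d''. l x * h0123d x) = 0"
      unfolding h0123d_def by (rule dep_func[OF Z0123d _ l1 l2]) simp_all
    moreover have "set ''012345a'' - set ''0123d'' = {CHR ''4'', CHR ''5'', CHR ''a''}" by auto
    ultimately show ?thesis by (simp add: algebra_simps)
  qed
  have Gl0123d: "h0123d (CHR ''4'') < 0" "h0123d (CHR ''5'') < 0" "h0123d (CHR ''a'') < 0"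
    unfolding h0123d_def by (auto intro!: N0123d simp: prismatoid_vertices_def)

  have El0134e: "l (CHR ''2'') * h0134e (CHR ''2'') + l (CHR ''5'') * h0134e (CHR ''5'') + l (CHR ''a'') * h0134e (CHR ''a'') = 0"
  proof -
    have "(\<Sum>x\<in>set ''012345a'' - set ''0134e''. l x * h0134e x) = 0"
      unfolding h0134e_def by (rule dep_func[OF Z0134e _ l1 l2]) simp_all
    moreover have "set ''012345a'' - set ''0134e'' = {CHR ''2'', CHR ''5'', CHR ''a''}" by auto
    ultimately show ?thesis by (simp add: algebra_simps)
  qed
  have Gl0134e: "h0134e (CHR ''2'') < 0" "h0134e (CHR ''5'') < 0" "h0134e (CHR ''a'') < 0"
    unfolding h0134e_def by (auto intro!: N0134e simp: prismatoid_vertices_def)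

  have El0145f: "l (CHR ''2'') * h0145f (CHR ''2'') + l (CHR ''3'') * h0145f (CHR ''3'') + l (CHR ''a'') * h0145f (CHR ''a'') = 0"
  proof -
    have "(\<Sum>x\<in>set ''012345a'' - set ''0145f''. l x * h0145f x) = 0"
      unfolding h0145f_def by (rule dep_func[OF Z0145f _ l1 l2]) simp_all
    moreover have "set ''012345a'' - set ''0145f'' = {CHR ''2'', CHR ''3'', CHR ''a''}" by auto
    ultimately show ?thesis by (simp add: algebra_simps)
  qed
  have Gl0145f: "h0145f (CHR ''2'') < 0" "h0145f (CHR ''3'') < 0" "h0145f (CHR ''a'') < 0"
    unfolding h0145f_def by (auto intro!: N0145f simp: prismatoid_vertices_def)

  have El0234e: "l (CHR ''1'') * h0234e (CHR ''1'') + l (CHR ''5'') * h0234e (CHR ''5'') + l (CHR ''a'') * h0234e (CHR ''a'') = 0"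
  proof -
    have "(\<Sum>x\<in>set ''012345a'' - set ''0234e''. l x * h0234e x) = 0"
      unfolding h0234e_def by (rule dep_func[OF Z0234e _ l1 l2]) simp_all
    moreover have "set ''012345a'' - set ''0234e'' = {CHR ''1'', CHR ''5'', CHR ''a''}" by auto
    ultimately show ?thesis by (simp add: algebra_simps)
  qed
  have Gl0234e: "h0234e (CHR ''1'') < 0" "h0234e (CHR ''5'') < 0" "h0234e (CHR ''a'') < 0"
    unfolding h0234e_def by (auto intro!: N0234e simp: prismatoid_vertices_def)

  have El1234e: "l (CHR ''0'') * h1234e (CHR ''0'') + l (CHR ''5'') * h1234e (CHR ''5'') + l (CHR ''a'') * h1234e (CHR ''a'') = 0"
  proof -
    have "(\<Sum>x\<in>set ''012345a'' - set ''1234e''. l x * h1234e x) = 0"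
      unfolding h1234e_def by (rule dep_func[OF Z1234e _ l1 l2]) simp_all
    moreover have "set ''012345a'' - set ''1234e'' = {CHR ''0'', CHR ''5'', CHR ''a''}" by auto
    ultimately show ?thesis by (simp add: algebra_simps)
  qed
  have Gl1234e: "h1234e (CHR ''0'') < 0" "h1234e (CHR ''5'') < 0" "h1234e (CHR ''a'') < 0"
    unfolding h1234e_def by (auto intro!: N1234e simp: prismatoid_vertices_def)

  have El024ae: "l (CHR ''1'') * h024ae (CHR ''1'') + l (CHR ''3'') * h024ae (CHR ''3'') + l (CHR ''5'') * h024ae (CHR ''5'') = 0"
  proof -
    have "(\<Sum>x\<in>set ''012345a'' - set ''024ae''. l x * h024ae x) = 0"
      unfolding h024ae_def by (rule dep_func[OF Z024ae _ l1 l2]) simp_all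
    moreover have "set ''012345a'' - set ''024ae'' = {CHR ''1'', CHR ''3'', CHR ''5''}" by auto
    ultimately show ?thesis by (simp add: algebra_simps)
  qed
  have Gl024ae: "h024ae (CHR ''1'') < 0" "h024ae (CHR ''3'') < 0" "h024ae (CHR ''5'') < 0"
    unfolding h024ae_def by (auto intro!: N024ae simp: prismatoid_vertices_def)

  have El025ae: "l (CHR ''1'') * h025ae (CHR ''1'') + l (CHR ''3'') * h025ae (CHR ''3'') + l (CHR ''4'') * h025ae (CHR ''4'') = 0"
  proof -
    have "(\<Sum>x\<in>set ''012345a'' - set ''025ae''. l x * h025ae x) = 0"
      unfolding h025ae_def by (rule dep_func[OF Z025ae _ l1 l2]) simp_all
    moreover have "set ''012345a'' - set ''025ae'' = {CHR ''1'', CHR ''3'', CHR ''4''}" by auto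
    ultimately show ?thesis by (simp add: algebra_simps)
  qed
  have Gl025ae: "h025ae (CHR ''1'') < 0" "h025ae (CHR ''3'') < 0" "h025ae (CHR ''4'') < 0"
    unfolding h025ae_def by (auto intro!: N025ae simp: prismatoid_vertices_def)

  have subm: "set ''01234ae'' \<subseteq> prismatoid_vertices" by (simp add: prismatoid_vertices_def)
  obtain m where m1: "(\<Sum>x\<in>set ''01234ae''. m x) = 0" and m2: "(\<Sum>x\<in>set ''01234ae''. m x *\<^sub>R \<phi> x) = 0"
    and m3: "\<exists>x\<in>set ''01234ae''. m x \<noteq> 0"
    using dep7[of \<phi> "set ''01234ae''" P] inj_on_subset[OF inj subm] inP subm assms(2) by (auto simp: image_subset_iff)

  have Em014ae: "m (CHR ''2'') * h014ae (CHR ''2'') + m (CHR ''3'') * h014ae (CHR ''3'') = 0"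
  proof -
    have "(\<Sum>x\<in>set ''01234ae'' - set ''014ae''. m x * h014ae x) = 0"
      unfolding h014ae_def by (rule dep_func[OF Z014ae _ m1 m2]) simp_all
    moreover have "set ''01234ae'' - set ''014ae'' = {CHR ''2'', CHR ''3''}" by auto
    ultimately show ?thesis by (simp add: algebra_simps)
  qed
  have Gm014ae: "h014ae (CHR ''2'') < 0" "h014ae (CHR ''3'') < 0"
    unfolding h014ae_def by (auto intro!: N014ae simp: prismatoid_vertices_def)

  have Em013ae: "m (CHR ''2'') * h013ae (CHR ''2'') + m (CHR ''4'') * h013ae (CHR ''4'') = 0"
  proof -
    have "(\<Sum>x\<in>set ''01234ae'' - set ''013ae''. m x * h013ae x) = 0"
      unfolding h013ae_def by (rule dep_func[OF Z013ae _ m1 m2]) simp_all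
    moreover have "set ''01234ae'' - set ''013ae'' = {CHR ''2'', CHR ''4''}" by auto
    ultimately show ?thesis by (simp add: algebra_simps)
  qed
  have Gm013ae: "h013ae (CHR ''2'') < 0" "h013ae (CHR ''4'') < 0"
    unfolding h013ae_def by (auto intro!: N013ae simp: prismatoid_vertices_def)

  have Em123ae: "m (CHR ''0'') * h123ae (CHR ''0'') + m (CHR ''4'') * h123ae (CHR ''4'') = 0"
  proof -
    have "(\<Sum>x\<in>set ''01234ae'' - set ''123ae''. m x * h123ae x) = 0"
      unfolding h123ae_def by (rule dep_func[OF Z123ae _ m1 m2]) simp_all
    moreover have "set ''01234ae'' - set ''123ae'' = {CHR ''0'', CHR ''4''}" by auto
    ultimately show ?thesis by (simp add: algebra_simps)
  qed
  have Gm123ae: "h123ae (CHR ''0'') < 0" "h123ae (CHR ''4'') < 0"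
    unfolding h123ae_def by (auto intro!: N123ae simp: prismatoid_vertices_def)

  have Em024ae: "m (CHR ''1'') * h024ae (CHR ''1'') + m (CHR ''3'') * h024ae (CHR ''3'') = 0"
  proof -
    have "(\<Sum>x\<in>set ''01234ae'' - set ''024ae''. m x * h024ae x) = 0"
      unfolding h024ae_def by (rule dep_func[OF Z024ae _ m1 m2]) simp_all
    moreover have "set ''01234ae'' - set ''024ae'' = {CHR ''1'', CHR ''3''}" by auto
    ultimately show ?thesis by (simp add: algebra_simps)
  qed
  have Gm024ae: "h024ae (CHR ''1'') < 0" "h024ae (CHR ''3'') < 0"
    unfolding h024ae_def by (auto intro!: N024ae simp: prismatoid_vertices_def)

  have Em0234e: "m (CHR ''1'') * h0234e (CHR ''1'') + m (CHR ''a'') * h0234e (CHR ''a'') = 0"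
  proof -
    have "(\<Sum>x\<in>set ''01234ae'' - set ''0234e''. m x * h0234e x) = 0"
      unfolding h0234e_def by (rule dep_func[OF Z0234e _ m1 m2]) simp_all
    moreover have "set ''01234ae'' - set ''0234e'' = {CHR ''1'', CHR ''a''}" by auto
    ultimately show ?thesis by (simp add: algebra_simps)
  qed
  have Gm0234e: "h0234e (CHR ''1'') < 0" "h0234e (CHR ''a'') < 0"
    unfolding h0234e_def by (auto intro!: N0234e simp: prismatoid_vertices_def)

  have Em025ae: "m (CHR ''1'') * h025ae (CHR ''1'') + m (CHR ''3'') * h025ae (CHR ''3'') + m (CHR ''4'') * h025ae (CHR ''4'') = 0"
  proof -
    have "(\<Sum>x\<in>set ''01234ae'' - set ''025ae''. m x * h025ae x) = 0"
      unfolding h025ae_def by (rule dep_func[OF Z025ae _ m1 m2]) simp_all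
    moreover have "set ''01234ae'' - set ''025ae'' = {CHR ''1'', CHR ''3'', CHR ''4''}" by auto
    ultimately show ?thesis by (simp add: algebra_simps)
  qed
  have Gm025ae: "h025ae (CHR ''1'') < 0" "h025ae (CHR ''3'') < 0" "h025ae (CHR ''4'') < 0"
    unfolding h025ae_def by (auto intro!: N025ae simp: prismatoid_vertices_def)

  have la0: "l (CHR ''a'') = 0" using El0123456 Gl0123456 by simp
  have l5: "l (CHR ''5'') \<noteq> 0"
  proof
    assume a5: "l (CHR ''5'') = 0"
    then have a4: "l (CHR ''4'') = 0" using El0123d Gl0123d la0 by simp
    have a2: "l (CHR ''2'') = 0" using El0134e Gl0134e la0 a5 by simp
    have a3: "l (CHR ''3'') = 0" using El0145f Gl0145f la0 a2 by simp
    have a1: "l (CHR ''1'') = 0" using El0234e Gl0234e la0 a5 by simp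
    have a0: "l (CHR ''0'') = 0" using El1234e Gl1234e la0 a5 by simp
    show False using l3 a0 a1 a2 a3 a4 a5 la0 by simp
  qed
  have o45: "(0 < l (CHR ''4'') \<longleftrightarrow> l (CHR ''5'') < 0) \<and> (l (CHR ''4'') < 0 \<longleftrightarrow> 0 < l (CHR ''5''))"
    by (rule opp2) (use El0123d Gl0123d la0 in simp_all)
  have o25: "(0 < l (CHR ''2'') \<longleftrightarrow> l (CHR ''5'') < 0) \<and> (l (CHR ''2'') < 0 \<longleftrightarrow> 0 < l (CHR ''5''))"
    by (rule opp2) (use El0134e Gl0134e la0 in simp_all)
  have o23: "(0 < l (CHR ''2'') \<longleftrightarrow> l (CHR ''3'') < 0) \<and> (l (CHR ''2'') < 0 \<longleftrightarrow> 0 < l (CHR ''3''))"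
    by (rule opp2) (use El0145f Gl0145f la0 in simp_all)
  have sl: "(0 < l (CHR ''3'') \<and> 0 < l (CHR ''5'') \<and> l (CHR ''4'') < 0) \<or>
            (l (CHR ''3'') < 0 \<and> l (CHR ''5'') < 0 \<and> 0 < l (CHR ''4''))"
    using l5 o45 o25 o23 by linarith
  have m3: "m (CHR ''3'') \<noteq> 0"
  proof
    assume a3: "m (CHR ''3'') = 0"
    then have a2: "m (CHR ''2'') = 0" using Em014ae Gm014ae by simp
    have a4: "m (CHR ''4'') = 0" using Em013ae Gm013ae a2 by simp
    have a0: "m (CHR ''0'') = 0" using Em123ae Gm123ae a4 by simp
    have a1: "m (CHR ''1'') = 0" using Em024ae Gm024ae a3 by simp
    have aa: "m (CHR ''a'') = 0" using Em0234e Gm0234e a1 by simp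
    have ae: "m (CHR ''e'') = 0" using m1 a0 a1 a2 a3 a4 aa by simp
    show False using m3 a0 a1 a2 a3 a4 aa ae by simp
  qed
  have o23m: "(0 < m (CHR ''2'') \<longleftrightarrow> m (CHR ''3'') < 0) \<and> (m (CHR ''2'') < 0 \<longleftrightarrow> 0 < m (CHR ''3''))"
    by (rule opp2) (use Em014ae Gm014ae in simp_all)
  have o24m: "(0 < m (CHR ''2'') \<longleftrightarrow> m (CHR ''4'') < 0) \<and> (m (CHR ''2'') < 0 \<longleftrightarrow> 0 < m (CHR ''4''))"
    by (rule opp2) (use Em013ae Gm013ae in simp_all)
  have sm: "(0 < m (CHR ''3'') \<and> 0 < m (CHR ''4'')) \<or> (m (CHR ''3'') < 0 \<and> m (CHR ''4'') < 0)"
    using m3 o23m o24m by linarith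
  show False
    by (rule final_contra[OF El024ae El025ae Em024ae Em025ae _ _ _ _ sl sm])
       (use Gl024ae Gl025ae in simp_all)
qed

end
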